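(* If $\Sigma \cup \{x\} \vdash P$ and $v \not\in \Sigma$, then $\Sigma \cup \{v\} \vdash P[v/x]$.
   Context: lqCCS is a quantum process calculus whose processes are built from: discard $\mathbf{0}_{\tilde e}$ (a deadlocked process keeping ownership of the qubits $\tilde e$), $\tau.P$, superoperator application $\mathcal{E}(\tilde e).P$, measurement $M(\tilde e \triangleright x).P$ (measure the qubits $\tilde e$ and bind the classical outcome to $x$), input $c?x.P$, asynchronous output $c!e$, sum $P+Q$, parallel composition $P \parallel Q$, restriction $P \setminus c$, and if-then-else. Typing judgments have the form $\Sigma \vdash P$, where $\Sigma$ is a set of qubit names, used linearly: a qubit name enters $\Sigma$ only by being sent ($\{e\} \vdash c!e$ for a quantum channel $c$) or discarded ($\Sigma \vdash \mathbf{0}_{\tilde e}$ with $\tilde e$ an enumeration of $\Sigma$); a parallel composition $P_1 \parallel P_2$ is typed by $\Sigma_1 \cup \Sigma_2$ only if $\Sigma_1 \vdash P_1$, $\Sigma_2 \vdash P_2$ and $\Sigma_1 \cap \Sigma_2 = \emptyset$; receiving a qubit on a quantum channel, $c?x.P$, is typed by $\Sigma$ when $\Sigma \cup \{x\} \vdash P$; superoperators and measurements may only act on qubits in the current $\Sigma$. Here $x$ is a quantum variable, $v$ a qubit name, and $P[v/x]$ denotes the substitution of $v$ for $x$ in $P$. *)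

theory Defs
  imports Main
begin

text \<open>Syntax of lqCCS.
  'q : qubit names, 'x : quantum variables, 'y : classical variables,
  'c : channel names, 's : superoperator symbols, 'm : measurement symbols,
  'b : boolean guards (classical expressions of if-then-else),
  'e : classical expressions (sent on classical channels).\<close>

datatype ('q, 'x) qexp = QN 'q | QV 'x

datatype ('q, 'x, 'y, 'c, 's, 'm, 'b, 'e) proc =
    Discard "('q, 'x) qexp list"
  | Tau "('q, 'x, 'y, 'c, 's, 'm, 'b, 'e) proc"
  | SupOp 's "('q, 'x) qexp list" "('q, 'x, 'y, 'c, 's, 'm, 'b, 'e) proc"
  | Meas 'm "('q, 'x) qexp list" 'y "('q, 'x, 'y, 'c, 's, 'm, 'b, 'e) proc"
  | QIn 'c 'x "('q, 'x, 'y, 'c, 's, 'm, 'b, 'e) proc"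
  | CIn 'c 'y "('q, 'x, 'y, 'c, 's, 'm, 'b, 'e) proc"
  | QOut 'c "('q, 'x) qexp"
  | COut 'c 'e
  | Sum "('q, 'x, 'y, 'c, 's, 'm, 'b, 'e) proc" "('q, 'x, 'y, 'c, 's, 'm, 'b, 'e) proc"
  | Par "('q, 'x, 'y, 'c, 's, 'm, 'b, 'e) proc" "('q, 'x, 'y, 'c, 's, 'm, 'b, 'e) proc"
  | Res "('q, 'x, 'y, 'c, 's, 'm, 'b, 'e) proc" 'c
  | Ite 'b "('q, 'x, 'y, 'c, 's, 'm, 'b, 'e) proc" "('q, 'x, 'y, 'c, 's, 'm, 'b, 'e) proc"

fun qsubst :: "'q \<Rightarrow> 'x \<Rightarrow> ('q, 'x) qexp \<Rightarrow> ('q, 'x) qexp" where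
  "qsubst v x (QV y) = (if y = x then QN v else QV y)"
| "qsubst v x (QN w) = QN w"

fun psubst :: "'q \<Rightarrow> 'x \<Rightarrow> ('q, 'x, 'y, 'c, 's, 'm, 'b, 'e) proc \<Rightarrow> ('q, 'x, 'y, 'c, 's, 'm, 'b, 'e) proc" where
  "psubst v x (Discard es) = Discard (map (qsubst v x) es)"
| "psubst v x (Tau P) = Tau (psubst v x P)"
| "psubst v x (SupOp E es P) = SupOp E (map (qsubst v x) es) (psubst v x P)"
| "psubst v x (Meas M es y P) = Meas M (map (qsubst v x) es) y (psubst v x P)"
| "psubst v x (QIn c z P) = (if z = x then QIn c z P else QIn c z (psubst v x P))"
| "psubst v x (CIn c y P) = CIn c y (psubst v x P)"
| "psubst v x (QOut c e) = QOut c (qsubst v x e)"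
| "psubst v x (COut c e) = COut c e"
| "psubst v x (Sum P Q) = Sum (psubst v x P) (psubst v x Q)"
| "psubst v x (Par P Q) = Par (psubst v x P) (psubst v x Q)"
| "psubst v x (Res P c) = Res (psubst v x P) c"
| "psubst v x (Ite b P Q) = Ite b (psubst v x P) (psubst v x Q)"

text \<open>Linear typing  \<Sigma> \<turnstile> P ; qch c holds iff c is a quantum channel.\<close>

inductive typed :: "('c \<Rightarrow> bool) \<Rightarrow> ('q, 'x) qexp set \<Rightarrow> ('q, 'x, 'y, 'c, 's, 'm, 'b, 'e) proc \<Rightarrow> bool"
  for qch :: "'c \<Rightarrow> bool" where
  T_Discard: "distinct es \<Longrightarrow> typed qch (set es) (Discard es)"
| T_Tau: "typed qch \<Sigma> P \<Longrightarrow> typed qch \<Sigma> (Tau P)"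
| T_SupOp: "typed qch \<Sigma> P \<Longrightarrow> distinct es \<Longrightarrow> set es \<subseteq> \<Sigma> \<Longrightarrow> typed qch \<Sigma> (SupOp E es P)"
| T_Meas: "typed qch \<Sigma> P \<Longrightarrow> distinct es \<Longrightarrow> set es \<subseteq> \<Sigma> \<Longrightarrow> typed qch \<Sigma> (Meas M es y P)"
| T_QIn: "qch c \<Longrightarrow> QV z \<notin> \<Sigma> \<Longrightarrow> typed qch (\<Sigma> \<union> {QV z}) P \<Longrightarrow> typed qch \<Sigma> (QIn c z P)"
| T_CIn: "\<not> qch c \<Longrightarrow> typed qch \<Sigma> P \<Longrightarrow> typed qch \<Sigma> (CIn c y P)"
| T_QOut: "qch c \<Longrightarrow> typed qch {e} (QOut c e)"
| T_COut: "\<not> qch c \<Longrightarrow> typed qch {} (COut c e)"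
| T_Sum: "typed qch \<Sigma> P \<Longrightarrow> typed qch \<Sigma> Q \<Longrightarrow> typed qch \<Sigma> (Sum P Q)"
| T_Par: "typed qch \<Sigma>1 P \<Longrightarrow> typed qch \<Sigma>2 Q \<Longrightarrow> \<Sigma>1 \<inter> \<Sigma>2 = {} \<Longrightarrow> typed qch (\<Sigma>1 \<union> \<Sigma>2) (Par P Q)"
| T_Res: "typed qch \<Sigma> P \<Longrightarrow> typed qch \<Sigma> (Res P c)"
| T_Ite: "typed qch \<Sigma> P \<Longrightarrow> typed qch \<Sigma> Q \<Longrightarrow> typed qch \<Sigma> (Ite b P Q)"

end

theory Submission
  imports Defs
begin

lemma qsubst_eq: "qsubst v x a = (if a = QV x then QN v else a)"
  by (cases a) auto

lemma map_qsubst_fresh: "QV x \<notin> set es \<Longrightarrow> map (qsubst v x) es = es"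
  by (induction es) (auto simp: qsubst_eq)

lemma psubst_fresh:
  assumes "typed qch G P" "QV x \<notin> G"
  shows "psubst v x P = P"
  using assms
proof (induction rule: typed.induct)
  case (T_Discard es)
  show ?case using map_qsubst_fresh[OF T_Discard.prems] by simp
next
  case (T_Tau \<Sigma> P)
  show ?case using T_Tau.IH[OF T_Tau.prems] by simp
next
  case (T_SupOp \<Sigma> P es E)
  have "QV x \<notin> set es" using T_SupOp.hyps(3) T_SupOp.prems by blast
  then show ?case using map_qsubst_fresh T_SupOp.IH[OF T_SupOp.prems] by simp
next
  case (T_Meas \<Sigma> P es M y)
  have "QV x \<notin> set es" using T_Meas.hyps(3) T_Meas.prems by blast
  then show ?case using map_qsubst_fresh T_Meas.IH[OF T_Meas.prems] by simp
next
  case (T_QIn c z \<Sigma> P)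
  show ?case
  proof (cases "z = x")
    case True then show ?thesis by simp
  next
    case False
    then have "QV x \<notin> \<Sigma> \<union> {QV z}" using T_QIn.prems by blast
    then show ?thesis using T_QIn.IH False by simp
  qed
next
  case (T_CIn c \<Sigma> P y)
  show ?case using T_CIn.IH[OF T_CIn.prems] by simp
next
  case (T_QOut c e)
  then show ?case by (simp add: qsubst_eq)
next
  case (T_COut c e)
  then show ?case by simp
next
  case (T_Sum \<Sigma> P Q)
  show ?case using T_Sum.IH(1)[OF T_Sum.prems] T_Sum.IH(2)[OF T_Sum.prems] by simp
next
  case (T_Par \<Sigma>1 P \<Sigma>2 Q)
  have a: "QV x \<notin> \<Sigma>1" and b: "QV x \<notin> \<Sigma>2" using T_Par.prems by blast+
  show ?case using T_Par.IH(1)[OF a] T_Par.IH(2)[OF b] by simp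
next
  case (T_Res \<Sigma> P c)
  show ?case using T_Res.IH[OF T_Res.prems] by simp
next
  case (T_Ite \<Sigma> P Q b)
  show ?case using T_Ite.IH(1)[OF T_Ite.prems] T_Ite.IH(2)[OF T_Ite.prems] by simp
qed

lemma qsubst_other: "e \<noteq> QV x \<Longrightarrow> qsubst v x e = e"
  by (cases e) auto

lemma map_qsubst_set:
  "set (map (qsubst v x) es) = (set es - {QV x}) \<union> (if QV x \<in> set es then {QN v} else {})"
  by (induction es) (auto simp: qsubst_eq)

lemma map_qsubst_distinct:
  assumes "distinct es" "QN v \<notin> set es"
  shows "distinct (map (qsubst v x) es)"
proof -
  have "inj_on (qsubst v x) (set es)"
    using assms(2) by (auto simp: inj_on_def qsubst_eq split: if_splits)
  then show ?thesis using assms(1) by (simp add: distinct_map)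
qed

lemma main:
  assumes "typed qch G P"
  shows "G = \<Sigma> \<union> {QV x} \<Longrightarrow> QV x \<notin> \<Sigma> \<Longrightarrow> QN v \<notin> \<Sigma> \<Longrightarrow> typed qch (\<Sigma> \<union> {QN v}) (psubst v x P)"
  using assms
proof (induction arbitrary: \<Sigma> rule: typed.induct)
  case (T_Discard es)
  have "QN v \<notin> set es" using T_Discard.hyps T_Discard.prems by blast
  then have d: "distinct (map (qsubst v x) es)" using T_Discard.hyps by (intro map_qsubst_distinct) auto
  have se: "set es = \<Sigma> \<union> {QV x}" using T_Discard.prems(1) .
  have "set (map (qsubst v x) es) = (set es - {QV x}) \<union> {QN v}"
    unfolding map_qsubst_set using se by simp
  also have "\<dots> = \<Sigma> \<union> {QN v}" using se T_Discard.prems(2) by blast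
  finally have "set (map (qsubst v x) es) = \<Sigma> \<union> {QN v}" .
  then show ?case using typed.T_Discard[OF d, of qch] by simp
next
  case (T_Tau \<Sigma>' P)
  have ih: "typed qch (\<Sigma> \<union> {QN v}) (psubst v x P)" using T_Tau.IH[OF T_Tau.prems] .
  show ?case using typed.T_Tau[OF ih] by simp
next
  case (T_SupOp \<Sigma>' P es E)
  have "QN v \<notin> set es" using T_SupOp.hyps T_SupOp.prems by blast
  then have d: "distinct (map (qsubst v x) es)" using T_SupOp.hyps by (intro map_qsubst_distinct) auto
  have "set (map (qsubst v x) es) \<subseteq> (set es - {QV x}) \<union> {QN v}"
    unfolding map_qsubst_set by auto
  also have "\<dots> \<subseteq> \<Sigma> \<union> {QN v}" using T_SupOp.hyps(3) T_SupOp.prems(1) by blast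
  finally have sub: "set (map (qsubst v x) es) \<subseteq> \<Sigma> \<union> {QN v}" .
  have ih: "typed qch (\<Sigma> \<union> {QN v}) (psubst v x P)" using T_SupOp.IH[OF T_SupOp.prems] .
  show ?case using typed.T_SupOp[OF ih d sub] by simp
next
  case (T_Meas \<Sigma>' P es M y)
  have "QN v \<notin> set es" using T_Meas.hyps T_Meas.prems by blast
  then have d: "distinct (map (qsubst v x) es)" using T_Meas.hyps by (intro map_qsubst_distinct) auto
  have "set (map (qsubst v x) es) \<subseteq> (set es - {QV x}) \<union> {QN v}"
    unfolding map_qsubst_set by auto
  also have "\<dots> \<subseteq> \<Sigma> \<union> {QN v}" using T_Meas.hyps(3) T_Meas.prems(1) by blast
  finally have sub: "set (map (qsubst v x) es) \<subseteq> \<Sigma> \<union> {QN v}" .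
  have ih: "typed qch (\<Sigma> \<union> {QN v}) (psubst v x P)" using T_Meas.IH[OF T_Meas.prems] .
  show ?case using typed.T_Meas[OF ih d sub] by simp
next
  case (T_QIn c z \<Sigma>' P)
  have zx: "QV z \<noteq> QV x" using T_QIn.hyps(2) T_QIn.prems(1) by blast
  then have zx': "z \<noteq> x" by simp
  have p1: "\<Sigma>' \<union> {QV z} = (\<Sigma> \<union> {QV z}) \<union> {QV x}" using T_QIn.prems(1) by blast
  have p2: "QV x \<notin> \<Sigma> \<union> {QV z}" using T_QIn.prems(2) zx by blast
  have p3: "QN v \<notin> \<Sigma> \<union> {QV z}" using T_QIn.prems(3) by blast
  have "typed qch ((\<Sigma> \<union> {QV z}) \<union> {QN v}) (psubst v x P)"
    using T_QIn.IH[OF p1 p2 p3] .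
  moreover have "(\<Sigma> \<union> {QV z}) \<union> {QN v} = (\<Sigma> \<union> {QN v}) \<union> {QV z}" by blast
  ultimately have ih: "typed qch ((\<Sigma> \<union> {QN v}) \<union> {QV z}) (psubst v x P)" by simp
  have nz: "QV z \<notin> \<Sigma> \<union> {QN v}" using T_QIn.hyps(2) T_QIn.prems(1) by blast
  show ?case using typed.T_QIn[OF T_QIn.hyps(1) nz ih] zx' by simp
next
  case (T_CIn c \<Sigma>' P y)
  have ih: "typed qch (\<Sigma> \<union> {QN v}) (psubst v x P)" using T_CIn.IH[OF T_CIn.prems] .
  show ?case using typed.T_CIn[OF T_CIn.hyps(1) ih] by simp
next
  case (T_QOut c e)
  have "QV x \<in> \<Sigma> \<union> {QV x}" by simp
  then have "QV x \<in> {e}" by (simp only: T_QOut.prems(1))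
  then have e1: "e = QV x" by simp
  have "\<Sigma> \<subseteq> \<Sigma> \<union> {QV x}" by (rule Un_upper1)
  then have "\<Sigma> \<subseteq> {QV x}" by (simp only: T_QOut.prems(1)[symmetric] e1)
  then have s0: "\<Sigma> = {}" using T_QOut.prems(2) by blast
  show ?case using s0 e1 typed.T_QOut[where qch=qch and c=c and e="QN v", OF T_QOut.hyps] by simp
next
  case (T_COut c e)
  then show ?case by blast
next
  case (T_Sum \<Sigma>' P Q)
  have ih1: "typed qch (\<Sigma> \<union> {QN v}) (psubst v x P)" using T_Sum.IH(1)[OF T_Sum.prems] .
  have ih2: "typed qch (\<Sigma> \<union> {QN v}) (psubst v x Q)" using T_Sum.IH(2)[OF T_Sum.prems] .
  show ?case using typed.T_Sum[OF ih1 ih2] by simp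
next
  case (T_Par \<Sigma>1 P \<Sigma>2 Q)
  have U: "\<Sigma>1 \<union> \<Sigma>2 = \<Sigma> \<union> {QV x}" using T_Par.prems(1) .
  have h1: "\<Sigma>1 \<subseteq> \<Sigma> \<union> {QV x}" unfolding U[symmetric] by (rule Un_upper1)
  have h2: "\<Sigma>2 \<subseteq> \<Sigma> \<union> {QV x}" unfolding U[symmetric] by (rule Un_upper2)
  have h3: "\<Sigma> \<subseteq> \<Sigma>1 \<union> \<Sigma>2" unfolding U by (rule Un_upper1)
  have h4: "QV x \<in> \<Sigma>1 \<union> \<Sigma>2" unfolding U by simp
  have dj: "\<Sigma>1 \<inter> \<Sigma>2 = {}" using T_Par.hyps(3) .
  have nx: "QV x \<notin> \<Sigma>" and nv: "QN v \<notin> \<Sigma>" using T_Par.prems(2,3) by auto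
  have nv1: "QN v \<notin> \<Sigma>1" using h1 nv by blast
  have nv2: "QN v \<notin> \<Sigma>2" using h2 nv by blast
  show ?case
  proof (cases "QV x \<in> \<Sigma>1")
    case True
    define A where "A = \<Sigma>1 - {QV x}"
    have n2: "QV x \<notin> \<Sigma>2" using True dj by blast
    have a1: "\<Sigma>1 = A \<union> {QV x}" unfolding A_def using True by blast
    have a2: "QV x \<notin> A" unfolding A_def by simp
    have a3: "QN v \<notin> A" unfolding A_def using nv1 by simp
    have ihP: "typed qch (A \<union> {QN v}) (psubst v x P)" using T_Par.IH(1)[OF a1 a2 a3] .
    have fQ: "psubst v x Q = Q" using psubst_fresh[OF T_Par.hyps(2) n2] .
    have d2: "(A \<union> {QN v}) \<inter> \<Sigma>2 = {}" unfolding A_def using dj nv2 by blast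
    have eq: "(A \<union> {QN v}) \<union> \<Sigma>2 = \<Sigma> \<union> {QN v}"
      unfolding A_def using h1 h2 h3 n2 nx by blast
    have "typed qch ((A \<union> {QN v}) \<union> \<Sigma>2) (Par (psubst v x P) Q)"
      by (rule typed.T_Par[OF ihP T_Par.hyps(2) d2])
    then show ?thesis unfolding eq by (simp add: fQ)
  next
    case False
    define A where "A = \<Sigma>2 - {QV x}"
    have n2: "QV x \<in> \<Sigma>2" using False h4 by blast
    have a1: "\<Sigma>2 = A \<union> {QV x}" unfolding A_def using n2 by blast
    have a2: "QV x \<notin> A" unfolding A_def by simp
    have a3: "QN v \<notin> A" unfolding A_def using nv2 by simp
    have ihQ: "typed qch (A \<union> {QN v}) (psubst v x Q)" using T_Par.IH(2)[OF a1 a2 a3] .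
    have fP: "psubst v x P = P" using psubst_fresh[OF T_Par.hyps(1) False] .
    have d2: "\<Sigma>1 \<inter> (A \<union> {QN v}) = {}" unfolding A_def using dj nv1 by blast
    have eq: "\<Sigma>1 \<union> (A \<union> {QN v}) = \<Sigma> \<union> {QN v}"
      unfolding A_def using h1 h2 h3 False nx by blast
    have "typed qch (\<Sigma>1 \<union> (A \<union> {QN v})) (Par P (psubst v x Q))"
      by (rule typed.T_Par[OF T_Par.hyps(1) ihQ d2])
    then show ?thesis unfolding eq by (simp add: fP)
  qed
next
  case (T_Res \<Sigma>' P c)
  have ih: "typed qch (\<Sigma> \<union> {QN v}) (psubst v x P)" using T_Res.IH[OF T_Res.prems] .
  show ?case using typed.T_Res[OF ih] by simp
next
  case (T_Ite \<Sigma>' P Q b)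
  have ih1: "typed qch (\<Sigma> \<union> {QN v}) (psubst v x P)" using T_Ite.IH(1)[OF T_Ite.prems] .
  have ih2: "typed qch (\<Sigma> \<union> {QN v}) (psubst v x Q)" using T_Ite.IH(2)[OF T_Ite.prems] .
  show ?case using typed.T_Ite[OF ih1 ih2] by simp
qed

theorem lemmaB1:
  fixes qch :: "'c \<Rightarrow> bool"
    and \<Sigma> :: "('q, 'x) qexp set"
    and P :: "('q, 'x, 'y, 'c, 's, 'm, 'b, 'e) proc"
  assumes "typed qch (\<Sigma> \<union> {QV x}) P"
    and "QV x \<notin> \<Sigma>"
    and "QN v \<notin> \<Sigma>"
  shows "typed qch (\<Sigma> \<union> {QN v}) (psubst v x P)"
  using main[OF assms(1) refl assms(2,3)] .

end
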